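(* Let $Y$ be a finite connected simple undirected graph. If $Y$ is not bipartite then $\delta(Y)=\tfrac12\kappa(Y)$. If $Y$ is bipartite then $\delta(Y)=\tfrac12(\kappa(Y)+1)$.
   Context: $\mathsf{Acyc}(Y)$ is the set of acyclic orientations of $Y$. A click at a vertex $x$ that is a source of an orientation reverses all edges incident to $x$, making $x$ a sink. Two acyclic orientations are $\kappa$-equivalent if one can be transformed into the other by a finite sequence of clicks; $\kappa(Y)$ is the number of $\kappa$-equivalence classes. For $O\in\mathsf{Acyc}(Y)$ let $O^{\mathrm{rev}}$ denote the orientation with every edge reversed. $\delta$-equivalence is the equivalence relation on $\mathsf{Acyc}(Y)$ generated by clicks and by $O\mapsto O^{\mathrm{rev}}$, and $\delta(Y)$ is the number of $\delta$-equivalence classes. *)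

theory Defs
  imports Complex_Main
begin

definition simple_graph :: "'a set \<Rightarrow> ('a \<Rightarrow> 'a \<Rightarrow> bool) \<Rightarrow> bool" where
  "simple_graph V E \<longleftrightarrow> finite V \<and> (\<forall>x y. E x y \<longrightarrow> x \<in> V \<and> y \<in> V)
     \<and> (\<forall>x y. E x y \<longrightarrow> E y x) \<and> (\<forall>x. \<not> E x x)"

definition edge_rel :: "('a \<Rightarrow> 'a \<Rightarrow> bool) \<Rightarrow> ('a \<times> 'a) set" where
  "edge_rel E = {(x, y). E x y}"

definition connected_graph :: "'a set \<Rightarrow> ('a \<Rightarrow> 'a \<Rightarrow> bool) \<Rightarrow> bool" where
  "connected_graph V E \<longleftrightarrow> (\<forall>x\<in>V. \<forall>y\<in>V. (x, y) \<in> (edge_rel E)\<^sup>*)"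

definition bipartite :: "'a set \<Rightarrow> ('a \<Rightarrow> 'a \<Rightarrow> bool) \<Rightarrow> bool" where
  "bipartite V E \<longleftrightarrow> (\<exists>c :: 'a \<Rightarrow> bool. \<forall>x\<in>V. \<forall>y\<in>V. E x y \<longrightarrow> c x \<noteq> c y)"

definition Acyc :: "'a set \<Rightarrow> ('a \<Rightarrow> 'a \<Rightarrow> bool) \<Rightarrow> ('a \<times> 'a) set set" where
  "Acyc V E = {Or. Or \<subseteq> edge_rel E
      \<and> (\<forall>x y. E x y \<longrightarrow> ((x, y) \<in> Or \<longleftrightarrow> (y, x) \<notin> Or))
      \<and> acyclic Or}"

definition is_source :: "('a \<times> 'a) set \<Rightarrow> 'a \<Rightarrow> bool" where
  "is_source Or x \<longleftrightarrow> (\<forall>y. (y, x) \<notin> Or)"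

definition click :: "('a \<times> 'a) set \<Rightarrow> 'a \<Rightarrow> ('a \<times> 'a) set" where
  "click Or x = {(a, b) \<in> Or. a \<noteq> x \<and> b \<noteq> x} \<union> {(b, a). (a, b) \<in> Or \<and> (a = x \<or> b = x)}"

definition click_step :: "'a set \<Rightarrow> ('a \<Rightarrow> 'a \<Rightarrow> bool) \<Rightarrow> (('a \<times> 'a) set \<times> ('a \<times> 'a) set) set" where
  "click_step V E = {(Or, Or'). Or \<in> Acyc V E \<and> (\<exists>x\<in>V. is_source Or x \<and> Or' = click Or x)}"

definition rev_orient :: "('a \<times> 'a) set \<Rightarrow> ('a \<times> 'a) set" where
  "rev_orient Or = Or\<inverse>"

definition rev_step :: "'a set \<Rightarrow> ('a \<Rightarrow> 'a \<Rightarrow> bool) \<Rightarrow> (('a \<times> 'a) set \<times> ('a \<times> 'a) set) set" where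
  "rev_step V E = {(Or, Or'). Or \<in> Acyc V E \<and> Or' = rev_orient Or}"

definition kappa_equiv :: "'a set \<Rightarrow> ('a \<Rightarrow> 'a \<Rightarrow> bool) \<Rightarrow> (('a \<times> 'a) set \<times> ('a \<times> 'a) set) set" where
  "kappa_equiv V E = (click_step V E \<union> (click_step V E)\<inverse>)\<^sup>*"

definition delta_equiv :: "'a set \<Rightarrow> ('a \<Rightarrow> 'a \<Rightarrow> bool) \<Rightarrow> (('a \<times> 'a) set \<times> ('a \<times> 'a) set) set" where
  "delta_equiv V E = (click_step V E \<union> (click_step V E)\<inverse> \<union> rev_step V E \<union> (rev_step V E)\<inverse>)\<^sup>*"

definition kappa :: "'a set \<Rightarrow> ('a \<Rightarrow> 'a \<Rightarrow> bool) \<Rightarrow> nat" where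
  "kappa V E = card (Acyc V E // kappa_equiv V E)"

definition delta :: "'a set \<Rightarrow> ('a \<Rightarrow> 'a \<Rightarrow> bool) \<Rightarrow> nat" where
  "delta V E = card (Acyc V E // delta_equiv V E)"

end

theory Submission
  imports Defs
begin



lemma click_mem: "(a,b) \<in> click Or x \<longleftrightarrow> (if a = x \<or> b = x then (b,a) \<in> Or else (a,b) \<in> Or)"
  unfolding click_def by auto

locale sg =
  fixes V :: "'a set" and E :: "'a \<Rightarrow> 'a \<Rightarrow> bool"
  assumes sg: "simple_graph V E"
begin

lemma finV: "finite V" using sg unfolding simple_graph_def by blast
lemma EV: "E x y \<Longrightarrow> x \<in> V \<and> y \<in> V" using sg unfolding simple_graph_def by blast
lemma Esym: "E x y \<Longrightarrow> E y x" using sg unfolding simple_graph_def by blast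
lemma Eirr: "\<not> E x x" using sg unfolding simple_graph_def by blast

lemma Acyc_E: "Or \<in> Acyc V E \<Longrightarrow> (u,v) \<in> Or \<Longrightarrow> E u v"
  unfolding Acyc_def edge_rel_def by blast

lemma Acyc_or: "Or \<in> Acyc V E \<Longrightarrow> E u v \<Longrightarrow> (u,v) \<in> Or \<longleftrightarrow> (v,u) \<notin> Or"
  unfolding Acyc_def by blast

lemma Acyc_acyc: "Or \<in> Acyc V E \<Longrightarrow> acyclic Or"
  unfolding Acyc_def by blast

lemma conv_Acyc: assumes "Or \<in> Acyc V E" shows "Or\<inverse> \<in> Acyc V E"
proof -
  have "Or\<inverse> \<subseteq> edge_rel E" using Acyc_E[OF assms] Esym unfolding edge_rel_def by blast
  moreover have "\<forall>x y. E x y \<longrightarrow> ((x, y) \<in> Or\<inverse> \<longleftrightarrow> (y, x) \<notin> Or\<inverse>)"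
    using Acyc_or[OF assms] Esym by blast
  moreover have "acyclic (Or\<inverse>)" using Acyc_acyc[OF assms] by simp
  ultimately show ?thesis unfolding Acyc_def by blast
qed

lemma height_acyclic:
  assumes "\<And>u v. (u,v) \<in> Or \<Longrightarrow> (c u :: int) = c v + 1"
  shows "acyclic Or"
proof -
  have "(x,y) \<in> Or\<^sup>+ \<Longrightarrow> c x > c y" for x y
  proof (induction rule: trancl_induct)
    case (base y) from assms[OF base] show ?case by simp
  next
    case (step y z) from assms[OF step(2)] step(3) show ?case by simp
  qed
  thus ?thesis unfolding acyclic_def by (meson less_irrefl)
qed

lemma click_acyclic:
  assumes ac: "acyclic Or" and src: "is_source Or x"
  shows "acyclic (click Or x)"
proof -
  let ?S = "click Or x"
  let ?R = "{(a,b) \<in> Or. a \<noteq> x \<and> b \<noteq> x}"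
  have nox: "(x,w) \<notin> ?S" for w using src unfolding is_source_def by (simp add: click_mem)
  have key: "(y,z) \<in> ?S\<^sup>+ \<Longrightarrow> (y,z) \<in> ?R\<^sup>+ \<or> z = x" for y z
  proof (induction rule: trancl_induct)
    case (base z)
    show ?case
    proof (cases "z = x")
      case False
      have "y \<noteq> x" using nox base by blast
      with False base have "(y,z) \<in> Or" by (simp add: click_mem)
      with False \<open>y \<noteq> x\<close> have "(y,z) \<in> ?R" by blast
      thus ?thesis by blast
    qed simp
  next
    case (step z w)
    show ?case
    proof (cases "z = x")
      case True thus ?thesis using step nox by auto
    next
      case False
      with step have zR: "(y,z) \<in> ?R\<^sup>+" by auto
      show ?thesis
      proof (cases "w = x")
        case False
        with \<open>z \<noteq> x\<close> step(2) have "(z,w) \<in> ?R" by (auto simp: click_mem)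
        thus ?thesis using zR by (meson trancl.trancl_into_trancl)
      qed simp
    qed
  qed
  have sub: "p \<in> ?R\<^sup>+ \<Longrightarrow> p \<in> Or\<^sup>+" for p by (erule trancl_mono) auto
  have xx: "(x,x) \<notin> ?S\<^sup>+"
  proof
    assume "(x,x) \<in> ?S\<^sup>+"
    then obtain w where "(x,w) \<in> ?S" by (metis tranclD)
    with nox show False by blast
  qed
  show ?thesis unfolding acyclic_def
  proof
    fix y show "(y,y) \<notin> ?S\<^sup>+"
    proof
      assume h: "(y,y) \<in> ?S\<^sup>+"
      show False
      proof (cases "y = x")
        case True thus False using h xx by simp
      next
        case False
        with key[OF h] have "(y,y) \<in> ?R\<^sup>+" by simp
        with sub have "(y,y) \<in> Or\<^sup>+" by blast
        with ac show False unfolding acyclic_def by blast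
      qed
    qed
  qed
qed

lemma click_Acyc:
  assumes O: "Or \<in> Acyc V E" and src: "is_source Or x"
  shows "click Or x \<in> Acyc V E"
proof -
  have "E a b" if "(a,b) \<in> click Or x" for a b
  proof (cases "a = x \<or> b = x")
    case True
    with that have "(b,a) \<in> Or" by (simp add: click_mem)
    thus ?thesis using Acyc_E[OF O] Esym by blast
  next
    case False
    with that have "(a,b) \<in> Or" by (simp add: click_mem)
    thus ?thesis using Acyc_E[OF O] by blast
  qed
  hence e: "click Or x \<subseteq> edge_rel E" unfolding edge_rel_def by blast
  have o:  "((a,b) \<in> click Or x \<longleftrightarrow> (b,a) \<notin> click Or x)" if ab: "E a b" for a b
  proof -
    have ba: "E b a" using Esym ab by blast
    have 1: "(a,b) \<in> Or \<longleftrightarrow> (b,a) \<notin> Or" using Acyc_or[OF O ab] .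
    show ?thesis
    proof (cases "a = x \<or> b = x")
      case True
      have c1: "(a,b) \<in> click Or x \<longleftrightarrow> (b,a) \<in> Or" using True by (simp add: click_mem)
      have c2: "(b,a) \<in> click Or x \<longleftrightarrow> (a,b) \<in> Or" using True by (auto simp add: click_mem)
      show ?thesis using c1 c2 1 by blast
    next
      case False
      have c1: "(a,b) \<in> click Or x \<longleftrightarrow> (a,b) \<in> Or" using False by (simp add: click_mem)
      have c2: "(b,a) \<in> click Or x \<longleftrightarrow> (b,a) \<in> Or" using False by (auto simp add: click_mem)
      show ?thesis using c1 c2 1 by blast
    qed
  qed
  have a: "acyclic (click Or x)" by (rule click_acyclic[OF Acyc_acyc[OF O] src])
  have o2: "\<forall>a b. E a b \<longrightarrow> ((a,b) \<in> click Or x \<longleftrightarrow> (b,a) \<notin> click Or x)"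
    using o by blast
  show ?thesis unfolding Acyc_def mem_Collect_eq using e o2 a by (intro conjI)
qed

end


context sg begin

definition "S = click_step V E \<union> (click_step V E)\<inverse>"

lemma kappa_S: "kappa_equiv V E = S\<^sup>*" unfolding kappa_equiv_def S_def ..

lemma S_sym: "(a,b) \<in> S \<Longrightarrow> (b,a) \<in> S" unfolding S_def by blast

lemma kappa_sym: assumes "(a,b) \<in> kappa_equiv V E" shows "(b,a) \<in> kappa_equiv V E"
proof -
  have "(b,a) \<in> (S\<inverse>)\<^sup>*" using assms unfolding kappa_S by (rule rtrancl_converseI)
  moreover have "S\<inverse> = S"
  proof (rule set_eqI)
    fix p show "p \<in> S\<inverse> \<longleftrightarrow> p \<in> S" by (cases p) (auto intro: S_sym)
  qed
  ultimately show ?thesis unfolding kappa_S by simp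
qed

lemma kappa_trans: "(a,b) \<in> kappa_equiv V E \<Longrightarrow> (b,c) \<in> kappa_equiv V E \<Longrightarrow> (a,c) \<in> kappa_equiv V E"
  unfolding kappa_S by (rule rtrancl_trans)

lemma kappa_refl: "(a,a) \<in> kappa_equiv V E" unfolding kappa_S by simp

lemma click_step_iff: "(a,b) \<in> click_step V E \<longleftrightarrow> a \<in> Acyc V E \<and> (\<exists>x\<in>V. is_source a x \<and> b = click a x)"
  by (simp add: click_step_def)

lemma kappa_click: "Or \<in> Acyc V E \<Longrightarrow> x \<in> V \<Longrightarrow> is_source Or x \<Longrightarrow> (Or, click Or x) \<in> kappa_equiv V E"
  unfolding kappa_S S_def by (rule r_into_rtrancl, rule UnI1, unfold click_step_iff) blast

lemma click_conv_src: "is_source Or x \<Longrightarrow> is_source ((click Or x)\<inverse>) x"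
  unfolding is_source_def by (simp add: click_mem)

lemma click_conv_eq: "click ((click Or x)\<inverse>) x = Or\<inverse>"
proof -
  have "(a,b) \<in> click ((click Or x)\<inverse>) x \<longleftrightarrow> (a,b) \<in> Or\<inverse>" for a b
    by (cases "a = x \<or> b = x") (auto simp: click_mem)
  thus ?thesis by auto
qed

lemma S_conv: assumes "(y,z) \<in> S" shows "(y\<inverse>, z\<inverse>) \<in> S"
proof -
  from assms consider "(y,z) \<in> click_step V E" | "(z,y) \<in> click_step V E" unfolding S_def by blast
  thus ?thesis
  proof cases
    case 1
    then obtain x where y: "y \<in> Acyc V E" and x: "x \<in> V" "is_source y x" and z: "z = click y x"
      unfolding click_step_iff by blast
    have "z\<inverse> \<in> Acyc V E" using conv_Acyc[OF click_Acyc[OF y x(2)]] z by simp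
    moreover have "is_source (z\<inverse>) x" using z click_conv_src[OF x(2)] by simp
    moreover have "click (z\<inverse>) x = y\<inverse>" using z click_conv_eq by simp
    ultimately have "(z\<inverse>, y\<inverse>) \<in> click_step V E" unfolding click_step_iff using x(1) by metis
    thus ?thesis unfolding S_def by blast
  next
    case 2
    then obtain x where z: "z \<in> Acyc V E" and x: "x \<in> V" "is_source z x" and y: "y = click z x"
      unfolding click_step_iff by blast
    have "y\<inverse> \<in> Acyc V E" using conv_Acyc[OF click_Acyc[OF z x(2)]] y by simp
    moreover have "is_source (y\<inverse>) x" using y click_conv_src[OF x(2)] by simp
    moreover have "click (y\<inverse>) x = z\<inverse>" using y click_conv_eq by simp
    ultimately have "(y\<inverse>, z\<inverse>) \<in> click_step V E" unfolding click_step_iff using x(1) by metis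
    thus ?thesis unfolding S_def by blast
  qed
qed

lemma kappa_conv: "(a,b) \<in> kappa_equiv V E \<Longrightarrow> (a\<inverse>, b\<inverse>) \<in> kappa_equiv V E"
  unfolding kappa_S
proof (induction rule: rtrancl_induct)
  case base thus ?case by simp
next
  case (step y z)
  from S_conv[OF step(2)] step(3) show ?case by (meson rtrancl.rtrancl_into_rtrancl)
qed

definition hinv :: "('a \<times> 'a) set \<Rightarrow> ('a \<times> 'a) set \<Rightarrow> ('a \<Rightarrow> int) \<Rightarrow> bool" where
  "hinv Or P c \<longleftrightarrow> (\<forall>u v. (u,v) \<in> Or \<longrightarrow> ((c u = c v \<and> (u,v) \<in> P \<and> (v,u) \<notin> P)
        \<or> (c u = c v + 1 \<and> (v,u) \<in> P \<and> (u,v) \<notin> P)))"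

lemma hinv_fwd:
  assumes O: "Or \<in> Acyc V E" and h: "hinv Or y c" and src: "is_source y x"
  shows "hinv Or (click y x) (c(x := c x + 1))"
  unfolding hinv_def
proof (intro allI impI)
  fix u v assume uv: "(u,v) \<in> Or"
  have ne: "u \<noteq> v" using Acyc_E[OF O uv] Eirr by blast
  have H: "(c u = c v \<and> (u,v) \<in> y \<and> (v,u) \<notin> y) \<or> (c u = c v + 1 \<and> (v,u) \<in> y \<and> (u,v) \<notin> y)"
    using h uv unfolding hinv_def by blast
  have sx: "(w,x) \<notin> y" for w using src unfolding is_source_def by blast
  let ?c = "c(x := c x + 1)" and ?z = "click y x"
  show "(?c u = ?c v \<and> (u,v) \<in> ?z \<and> (v,u) \<notin> ?z) \<or> (?c u = ?c v + 1 \<and> (v,u) \<in> ?z \<and> (u,v) \<notin> ?z)"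
  proof (cases "u = x")
    case True
    with H sx ne have "c x = c v" "(x,v) \<in> y" by auto
    moreover have "(v,x) \<in> ?z \<longleftrightarrow> (x,v) \<in> y" "(x,v) \<in> ?z \<longleftrightarrow> (v,x) \<in> y" by (auto simp: click_mem)
    ultimately show ?thesis using True ne sx by auto
  next
    case False
    show ?thesis
    proof (cases "v = x")
      case True
      with H sx ne have "c u = c x + 1" "(x,u) \<in> y" by auto
      moreover have "(u,x) \<in> ?z \<longleftrightarrow> (x,u) \<in> y" "(x,u) \<in> ?z \<longleftrightarrow> (u,x) \<in> y" by (auto simp: click_mem)
      ultimately show ?thesis using True False sx by auto
    next
      case False2: False
      have "(u,v) \<in> ?z \<longleftrightarrow> (u,v) \<in> y" "(v,u) \<in> ?z \<longleftrightarrow> (v,u) \<in> y"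
        using False False2 by (auto simp: click_mem)
      thus ?thesis using H False False2 by auto
    qed
  qed
qed

lemma hinv_bwd:
  assumes O: "Or \<in> Acyc V E" and h: "hinv Or y c" and src: "is_source z x" and y: "y = click z x"
  shows "hinv Or z (c(x := c x - 1))"
  unfolding hinv_def
proof (intro allI impI)
  fix u v assume uv: "(u,v) \<in> Or"
  have ne: "u \<noteq> v" using Acyc_E[OF O uv] Eirr by blast
  have H: "(c u = c v \<and> (u,v) \<in> y \<and> (v,u) \<notin> y) \<or> (c u = c v + 1 \<and> (v,u) \<in> y \<and> (u,v) \<notin> y)"
    using h uv unfolding hinv_def by blast
  have sx: "(w,x) \<notin> z" for w using src unfolding is_source_def by blast
  have ym: "(a,b) \<in> y \<longleftrightarrow> (if a = x \<or> b = x then (b,a) \<in> z else (a,b) \<in> z)" for a b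
    unfolding y by (rule click_mem)
  let ?c = "c(x := c x - 1)"
  show "(?c u = ?c v \<and> (u,v) \<in> z \<and> (v,u) \<notin> z) \<or> (?c u = ?c v + 1 \<and> (v,u) \<in> z \<and> (u,v) \<notin> z)"
  proof (cases "u = x")
    case True
    have "(x,v) \<notin> y" using ym[of x v] sx by simp
    have "(v,x) \<in> y \<longleftrightarrow> (x,v) \<in> z" using ym[of v x] by simp
    with H True \<open>(x,v) \<notin> y\<close> have "c x = c v + 1" "(x,v) \<in> z" by auto
    thus ?thesis using True ne sx by auto
  next
    case False
    show ?thesis
    proof (cases "v = x")
      case True
      have "(x,u) \<notin> y" using ym[of x u] sx by simp
      have "(u,x) \<in> y \<longleftrightarrow> (x,u) \<in> z" using ym[of u x] by simp
      with H True \<open>(x,u) \<notin> y\<close> have "c u = c x" "(x,u) \<in> z" by auto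
      thus ?thesis using True False sx by auto
    next
      case False2: False
      have "(u,v) \<in> y \<longleftrightarrow> (u,v) \<in> z" "(v,u) \<in> y \<longleftrightarrow> (v,u) \<in> z"
        using False False2 ym by auto
      thus ?thesis using H False False2 by auto
    qed
  qed
qed

lemma kappa_height:
  assumes O: "Or \<in> Acyc V E" and k: "(Or,P) \<in> kappa_equiv V E"
  shows "\<exists>c. hinv Or P c"
  using k unfolding kappa_S
proof (induction rule: rtrancl_induct)
  case base
  have "hinv Or Or (\<lambda>_. 0)" unfolding hinv_def
  proof (intro allI impI)
    fix u v assume uv: "(u,v) \<in> Or"
    have "(v,u) \<notin> Or" using Acyc_or[OF O Acyc_E[OF O uv]] uv by blast
    thus "((\<lambda>_. 0::int) u = (\<lambda>_. 0) v \<and> (u,v) \<in> Or \<and> (v,u) \<notin> Or) \<or> ((\<lambda>_. 0::int) u = (\<lambda>_. 0) v + 1 \<and> (v,u) \<in> Or \<and> (u,v) \<notin> Or)"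
      using uv by simp
  qed
  thus ?case by blast
next
  case (step y z)
  then obtain c where c: "hinv Or y c" by blast
  from step(2) consider "(y,z) \<in> click_step V E" | "(z,y) \<in> click_step V E" unfolding S_def by blast
  thus ?case
  proof cases
    case 1
    then obtain x where "is_source y x" "z = click y x" unfolding click_step_iff by blast
    thus ?thesis using hinv_fwd[OF O c] by blast
  next
    case 2
    then obtain x where "is_source z x" "y = click z x" unfolding click_step_iff by blast
    thus ?thesis using hinv_bwd[OF O c] by blast
  qed
qed

lemma fixed_height:
  assumes O: "Or \<in> Acyc V E" and k: "(Or, Or\<inverse>) \<in> kappa_equiv V E"
  shows "\<exists>c. \<forall>u v. (u,v) \<in> Or \<longrightarrow> (c u :: int) = c v + 1"
proof -
  obtain c where c: "hinv Or (Or\<inverse>) c" using kappa_height[OF O k] by blast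
  have "(u,v) \<in> Or \<Longrightarrow> c u = c v + 1" for u v
  proof -
    assume uv: "(u,v) \<in> Or"
    have "(v,u) \<notin> Or" using Acyc_or[OF O Acyc_E[OF O uv]] uv by blast
    thus ?thesis using c uv unfolding hinv_def by auto
  qed
  thus ?thesis by blast
qed

lemma fixed_bipartite:
  assumes O: "Or \<in> Acyc V E" and k: "(Or, Or\<inverse>) \<in> kappa_equiv V E"
  shows "bipartite V E"
proof -
  obtain c where c: "\<And>u v. (u,v) \<in> Or \<Longrightarrow> (c u :: int) = c v + 1" using fixed_height[OF O k] by blast
  have "even (c x) \<noteq> even (c y)" if "E x y" for x y
  proof -
    have "(x,y) \<in> Or \<or> (y,x) \<in> Or" using Acyc_or[OF O that] by blast
    thus ?thesis
    proof
      assume "(x,y) \<in> Or" hence "c x = c y + 1" by (rule c) thus ?thesis by simp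
    next
      assume "(y,x) \<in> Or" hence "c y = c x + 1" by (rule c) thus ?thesis by simp
    qed
  qed
  thus ?thesis unfolding bipartite_def by (intro exI[of _ "\<lambda>x. even (c x)"]) blast
qed

end


context sg begin

lemma lower_bound: "\<exists>L. \<forall>y\<in>V. (L::int) \<le> c y"
proof -
  have "- (\<Sum>y\<in>V. \<bar>c y\<bar>) \<le> c x" if "x \<in> V" for x
  proof -
    have "\<bar>c x\<bar> \<le> (\<Sum>y\<in>V. \<bar>c y\<bar>)" by (rule member_le_sum[OF that _ finV]) simp
    thus ?thesis by linarith
  qed
  thus ?thesis by blast
qed

lemma descend_aux:
  "(\<Sum>y\<in>V. nat (c y - L)) = n \<Longrightarrow> Or \<in> Acyc V E \<Longrightarrow> (\<And>u v. (u,v) \<in> Or \<Longrightarrow> c u = c v + 1)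
   \<Longrightarrow> (\<And>y. y \<in> V \<Longrightarrow> L \<le> c y)
   \<Longrightarrow> \<exists>Or' c'. (Or,Or') \<in> kappa_equiv V E \<and> Or' \<in> Acyc V E \<and> (\<forall>u v. (u,v) \<in> Or' \<longrightarrow> c' u = c' v + 1)
        \<and> (\<forall>y\<in>V. c' y = L \<or> c' y = L + 1) \<and> (\<forall>y\<in>V. even (c' y - c y))"
proof (induction n arbitrary: Or c rule: less_induct)
  case (less n)
  note O = less.prems(2) and hc = less.prems(3) and lb = less.prems(4)
  show ?case
  proof (cases "\<forall>y\<in>V. c y \<le> L + 1")
    case True
    have "\<forall>y\<in>V. c y = L \<or> c y = L + 1" using True lb by force
    moreover have "\<forall>u v. (u,v) \<in> Or \<longrightarrow> c u = c v + 1" using hc by blast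
    ultimately show ?thesis using O kappa_refl by force
  next
    case False
    then obtain y0 where y0: "y0 \<in> V" "c y0 > L + 1" by force
    have Vne: "c ` V \<noteq> {}" using y0 by blast
    have "Max (c ` V) \<in> c ` V" using Max_in[OF finite_imageI[OF finV] Vne] .
    then obtain x where x: "x \<in> V" "c x = Max (c ` V)" by force
    have cmax: "c y \<le> c x" if "y \<in> V" for y
    proof -
      have "c y \<in> c ` V" using that by blast
      from Max_ge[OF finite_imageI[OF finV] this] x(2) show ?thesis by simp
    qed
    have cx: "c x \<ge> L + 2" using cmax[OF y0(1)] y0(2) by simp
    have src: "is_source Or x" unfolding is_source_def
    proof (intro allI notI)
      fix w assume "(w,x) \<in> Or"
      hence "w \<in> V" "c w = c x + 1" using Acyc_E[OF O] EV hc by blast+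
      thus False using cmax by force
    qed
    define Or1 where "Or1 = click Or x"
    define c1 where "c1 = c(x := c x - 2)"
    have O1: "Or1 \<in> Acyc V E" unfolding Or1_def by (rule click_Acyc[OF O src])
    have k1: "(Or, Or1) \<in> kappa_equiv V E" unfolding Or1_def by (rule kappa_click[OF O x(1) src])
    have h1: "c1 a = c1 b + 1" if ab: "(a,b) \<in> Or1" for a b
    proof (cases "a = x \<or> b = x")
      case True
      hence ba: "(b,a) \<in> Or" using ab unfolding Or1_def by (simp add: click_mem)
      have "a \<noteq> x" using ba src unfolding is_source_def by blast
      hence "b = x" using True by blast
      have "c b = c a + 1" using hc[OF ba] .
      thus ?thesis unfolding c1_def using \<open>a \<noteq> x\<close> \<open>b = x\<close> by simp
    next
      case False
      hence "(a,b) \<in> Or" using ab unfolding Or1_def by (simp add: click_mem)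
      thus ?thesis unfolding c1_def using False hc by simp
    qed
    have lb1: "L \<le> c1 y" if "y \<in> V" for y using lb[OF that] cx unfolding c1_def by simp
    have s0: "(\<Sum>y\<in>V. nat (c y - L)) = nat (c x - L) + (\<Sum>y\<in>V - {x}. nat (c y - L))"
      by (rule sum.remove[OF finV x(1)])
    have s1: "(\<Sum>y\<in>V. nat (c1 y - L)) = nat (c1 x - L) + (\<Sum>y\<in>V - {x}. nat (c1 y - L))"
      by (rule sum.remove[OF finV x(1)])
    have s2: "(\<Sum>y\<in>V - {x}. nat (c1 y - L)) = (\<Sum>y\<in>V - {x}. nat (c y - L))"
      by (rule sum.cong) (auto simp: c1_def)
    have "nat (c1 x - L) < nat (c x - L)" unfolding c1_def using cx by simp
    hence lt: "(\<Sum>y\<in>V. nat (c1 y - L)) < n" using s0 s1 s2 less.prems(1) by linarith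
    obtain Or' c' where R: "(Or1,Or') \<in> kappa_equiv V E" "Or' \<in> Acyc V E" "\<forall>u v. (u,v) \<in> Or' \<longrightarrow> c' u = c' v + 1"
        "\<forall>y\<in>V. c' y = L \<or> c' y = L + 1" "\<forall>y\<in>V. even (c' y - c1 y)"
      using less.IH[OF lt refl O1 h1 lb1] by blast
    have "\<forall>y\<in>V. even (c' y - c y)"
    proof
      fix y assume "y \<in> V"
      hence e: "even (c' y - c1 y)" using R(5) by blast
      have "c' y - c y = (c' y - c1 y) + (c1 y - c y)" by simp
      moreover have "even (c1 y - c y)" unfolding c1_def by simp
      ultimately show "even (c' y - c y)" using e by presburger
    qed
    moreover have "(Or,Or') \<in> kappa_equiv V E" using kappa_trans[OF k1 R(1)] .
    ultimately show ?thesis using R(2-4) by blast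
  qed
qed

lemma descend:
  assumes "Or \<in> Acyc V E" "\<And>u v. (u,v) \<in> Or \<Longrightarrow> c u = c v + 1" "\<And>y. y \<in> V \<Longrightarrow> L \<le> (c y :: int)"
  shows "\<exists>Or' c'. (Or,Or') \<in> kappa_equiv V E \<and> Or' \<in> Acyc V E \<and> (\<forall>u v. (u,v) \<in> Or' \<longrightarrow> c' u = c' v + 1)
        \<and> (\<forall>y\<in>V. c' y = L \<or> c' y = L + 1) \<and> (\<forall>y\<in>V. even (c' y - c y))"
  by (rule descend_aux[OF refl assms])

lemma level_orient:
  assumes O: "Or \<in> Acyc V E" and hc: "\<And>u v. (u,v) \<in> Or \<Longrightarrow> c u = c v + 1"
    and lv: "\<And>y. y \<in> V \<Longrightarrow> c y = L \<or> c y = (L::int) + 1"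
  shows "(u,v) \<in> Or \<longleftrightarrow> E u v \<and> c u = L + 1"
proof
  assume uv: "(u,v) \<in> Or"
  hence e: "E u v" by (rule Acyc_E[OF O])
  hence "u \<in> V" "v \<in> V" using EV by blast+
  hence "c u = L \<or> c u = L + 1" "c v = L \<or> c v = L + 1" using lv by blast+
  thus "E u v \<and> c u = L + 1" using e hc[OF uv] by auto
next
  assume a: "E u v \<and> c u = L + 1"
  show "(u,v) \<in> Or"
  proof (rule ccontr)
    assume "(u,v) \<notin> Or"
    hence "(v,u) \<in> Or" using Acyc_or[OF O] a by blast
    hence "c v = c u + 1" by (rule hc)
    moreover have "v \<in> V" using a EV by blast
    ultimately show False using lv a by force
  qed
qed

lemma swap:
  assumes O: "Or \<in> Acyc V E" and hc: "\<And>u v. (u,v) \<in> Or \<Longrightarrow> c u = c v + 1"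
    and lv: "\<And>y. y \<in> V \<Longrightarrow> c y = L \<or> c y = (L::int) + 1"
  shows "(Or, Or\<inverse>) \<in> kappa_equiv V E"
proof -
  have lb: "L - 1 \<le> c y" if "y \<in> V" for y using lv[OF that] by auto
  obtain P c' where P: "(Or,P) \<in> kappa_equiv V E" "P \<in> Acyc V E" "\<forall>u v. (u,v) \<in> P \<longrightarrow> c' u = c' v + 1"
      "\<forall>y\<in>V. c' y = L - 1 \<or> c' y = L - 1 + 1" "\<forall>y\<in>V. even (c' y - c y)"
    using descend[where c=c and L="L-1", OF O hc lb] by blast
  have eqL: "c' y = L \<longleftrightarrow> c y = L" if "y \<in> V" for y
  proof -
    have "even (c' y - c y)" using P(5) that by blast
    moreover have "c' y = L - 1 \<or> c' y = L" using P(4) that by auto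
    moreover have "c y = L \<or> c y = L + 1" using lv that by blast
    ultimately show ?thesis by auto
  qed
  have "P = Or\<inverse>"
  proof (rule set_eqI, clarify)
    fix u v
    have pm: "(u,v) \<in> P \<longleftrightarrow> E u v \<and> c' u = L - 1 + 1"
      by (rule level_orient[OF P(2)]) (use P(3,4) in blast)+
    have om: "(v,u) \<in> Or \<longleftrightarrow> E v u \<and> c v = L + 1" by (rule level_orient[OF O hc lv])
    show "(u,v) \<in> P \<longleftrightarrow> (u,v) \<in> Or\<inverse>"
    proof (cases "E u v")
      case True
      have vu: "E v u" using Esym True by blast
      have uV: "u \<in> V" using EV True by blast
      have "(v,u) \<in> Or \<longleftrightarrow> (u,v) \<notin> Or" using Acyc_or[OF O vu] .
      moreover have "(u,v) \<in> Or \<longleftrightarrow> E u v \<and> c u = L + 1" by (rule level_orient[OF O hc lv])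
      ultimately have "(v,u) \<in> Or \<longleftrightarrow> c u \<noteq> L + 1" using True by blast
      moreover have "c u \<noteq> L + 1 \<longleftrightarrow> c u = L" using lv[OF uV] by auto
      ultimately show ?thesis using pm eqL[OF uV] True by auto
    next
      case False
      thus ?thesis using pm om Esym by auto
    qed
  qed
  thus ?thesis using P(1) by simp
qed

end


context sg begin

lemma two_level:
  assumes O: "Or \<in> Acyc V E" and k: "(Or, Or\<inverse>) \<in> kappa_equiv V E"
  shows "\<exists>Or' b. (Or,Or') \<in> kappa_equiv V E \<and> Or' \<in> Acyc V E \<and> (\<forall>u v. (u,v) \<in> Or' \<longleftrightarrow> E u v \<and> b u)
          \<and> (Or', Or'\<inverse>) \<in> kappa_equiv V E"
proof -
  obtain c where c: "\<And>u v. (u,v) \<in> Or \<Longrightarrow> (c u :: int) = c v + 1" using fixed_height[OF O k] by blast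
  obtain L where L: "\<forall>y\<in>V. L \<le> c y" using lower_bound by blast
  obtain P c' where P: "(Or,P) \<in> kappa_equiv V E" "P \<in> Acyc V E" "\<forall>u v. (u,v) \<in> P \<longrightarrow> c' u = c' v + 1"
      "\<forall>y\<in>V. c' y = L \<or> c' y = L + 1"
    using descend[where c=c and L=L, OF O c] L by blast
  have hc: "\<And>u v. (u,v) \<in> P \<Longrightarrow> c' u = c' v + 1" using P(3) by blast
  have lv: "\<And>y. y \<in> V \<Longrightarrow> c' y = L \<or> c' y = L + 1" using P(4) by blast
  have A: "\<forall>u v. (u,v) \<in> P \<longleftrightarrow> E u v \<and> (\<lambda>y. c' y = L + 1) u"
    by (intro allI) (rule level_orient[where c=c' and L=L, OF P(2) hc lv])
  have B: "(P, P\<inverse>) \<in> kappa_equiv V E" by (rule swap[where c=c' and L=L, OF P(2) hc lv])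
  show ?thesis by (rule exI[of _ P], rule exI[of _ "\<lambda>y. c' y = L + 1"]) (intro conjI P(1) P(2) A B)
qed

lemma fixed_unique:
  assumes conn: "connected_graph V E" and O: "Or \<in> Acyc V E" and kO: "(Or, Or\<inverse>) \<in> kappa_equiv V E"
    and P: "P \<in> Acyc V E" and kP: "(P, P\<inverse>) \<in> kappa_equiv V E"
  shows "(Or, P) \<in> kappa_equiv V E"
proof (cases "V = {}")
  case True
  have "\<not> E u v" for u v using EV True by blast
  hence "Or = {}" "P = {}" using Acyc_E[OF O] Acyc_E[OF P] by auto
  thus ?thesis using kappa_refl by simp
next
  case False
  then obtain v0 where v0: "v0 \<in> V" by blast
  obtain O' b1 where O': "(Or,O') \<in> kappa_equiv V E" "O' \<in> Acyc V E" "\<forall>u v. (u,v) \<in> O' \<longleftrightarrow> E u v \<and> b1 u"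
      "(O', O'\<inverse>) \<in> kappa_equiv V E" using two_level[OF O kO] by (elim exE conjE) (rule that; assumption)
  obtain P' b2 where P': "(P,P') \<in> kappa_equiv V E" "P' \<in> Acyc V E" "\<forall>u v. (u,v) \<in> P' \<longleftrightarrow> E u v \<and> b2 u"
      "(P', P'\<inverse>) \<in> kappa_equiv V E" using two_level[OF P kP] by (elim exE conjE) (rule that; assumption)
  have col1: "b1 v \<longleftrightarrow> \<not> b1 u" if "E u v" for u v
  proof -
    have "E v u" using Esym that by blast
    have "(u,v) \<in> O' \<longleftrightarrow> (v,u) \<notin> O'" using Acyc_or[OF O'(2) that] .
    moreover have "(u,v) \<in> O' \<longleftrightarrow> b1 u" using O'(3)[rule_format, of u v] that by simp
    moreover have "(v,u) \<in> O' \<longleftrightarrow> b1 v" using O'(3)[rule_format, of v u] \<open>E v u\<close> by simp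
    ultimately show ?thesis by simp
  qed
  have col2: "b2 v \<longleftrightarrow> \<not> b2 u" if "E u v" for u v
  proof -
    have "E v u" using Esym that by blast
    have "(u,v) \<in> P' \<longleftrightarrow> (v,u) \<notin> P'" using Acyc_or[OF P'(2) that] .
    moreover have "(u,v) \<in> P' \<longleftrightarrow> b2 u" using P'(3)[rule_format, of u v] that by simp
    moreover have "(v,u) \<in> P' \<longleftrightarrow> b2 v" using P'(3)[rule_format, of v u] \<open>E v u\<close> by simp
    ultimately show ?thesis by simp
  qed
  have prp: "(b1 x \<longleftrightarrow> b2 x) \<longleftrightarrow> (b1 v0 \<longleftrightarrow> b2 v0)" if "x \<in> V" for x
  proof -
    have "(v0, x) \<in> (edge_rel E)\<^sup>*" using conn v0 that unfolding connected_graph_def by blast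
    thus ?thesis
    proof (induction rule: rtrancl_induct)
      case base thus ?case by simp
    next
      case (step y z)
      hence "E y z" unfolding edge_rel_def by simp
      thus ?case using col1[of y z] col2[of y z] step(3) by simp
    qed
  qed
  show ?thesis
  proof (cases "b1 v0 \<longleftrightarrow> b2 v0")
    case True
    have "O' = P'"
    proof (rule set_eqI, clarify)
      fix u v
      show "(u,v) \<in> O' \<longleftrightarrow> (u,v) \<in> P'"
      proof (cases "E u v")
        case True
        hence "u \<in> V" using EV by blast
        hence "b1 u \<longleftrightarrow> b2 u" using prp[of u] \<open>b1 v0 \<longleftrightarrow> b2 v0\<close> by simp
        thus ?thesis using O'(3)[rule_format, of u v] P'(3)[rule_format, of u v] by simp
      next
        case False thus ?thesis using O'(3)[rule_format, of u v] P'(3)[rule_format, of u v] by simp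
      qed
    qed
    hence "(O', P) \<in> kappa_equiv V E" using kappa_sym[OF P'(1)] by simp
    thus ?thesis using kappa_trans[OF O'(1)] by blast
  next
    case False
    have "P' = O'\<inverse>"
    proof (rule set_eqI, clarify)
      fix u v
      show "(u,v) \<in> P' \<longleftrightarrow> (u,v) \<in> O'\<inverse>"
      proof (cases "E u v")
        case True
        hence "u \<in> V" "E v u" using EV Esym by blast+
        hence "b1 u \<longleftrightarrow> \<not> b2 u" using prp[of u] False by simp
        moreover have "b1 v \<longleftrightarrow> \<not> b1 u" using col1[OF True] by simp
        ultimately have "b2 u \<longleftrightarrow> b1 v" by simp
        thus ?thesis using O'(3)[rule_format, of v u] P'(3)[rule_format, of u v] True \<open>E v u\<close> by simp
      next
        case False
        hence "\<not> E v u" using Esym by blast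
        thus ?thesis using O'(3)[rule_format, of v u] P'(3)[rule_format, of u v] False by simp
      qed
    qed
    hence "(O', P') \<in> kappa_equiv V E" using O'(4) by simp
    hence "(O', P) \<in> kappa_equiv V E" using kappa_trans kappa_sym[OF P'(1)] by blast
    thus ?thesis using kappa_trans[OF O'(1)] by blast
  qed
qed

lemma exists_fixed:
  assumes bip: "bipartite V E"
  shows "\<exists>Or \<in> Acyc V E. (Or, Or\<inverse>) \<in> kappa_equiv V E"
proof -
  obtain col :: "'a \<Rightarrow> bool" where col: "\<forall>x\<in>V. \<forall>y\<in>V. E x y \<longrightarrow> col x \<noteq> col y" using bip unfolding bipartite_def by blast
  have colE: "col x \<noteq> col y" if "E x y" for x y using col EV that by blast
  define Or0 where "Or0 = {(u,v). E u v \<and> col u}"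
  define h where "h = (\<lambda>u. if col u then 1 else (0::int))"
  have mem: "(u,v) \<in> Or0 \<longleftrightarrow> E u v \<and> col u" for u v unfolding Or0_def by simp
  have hc: "h u = h v + 1" if "(u,v) \<in> Or0" for u v
  proof -
    have "E u v" "col u" using that unfolding mem by simp_all
    hence "\<not> col v" using colE by blast
    thus ?thesis unfolding h_def using \<open>col u\<close> by simp
  qed
  have "Or0 \<subseteq> edge_rel E" unfolding edge_rel_def Or0_def by auto
  moreover have "\<forall>x y. E x y \<longrightarrow> ((x,y) \<in> Or0 \<longleftrightarrow> (y,x) \<notin> Or0)"
  proof (intro allI impI)
    fix x y assume "E x y"
    hence "E y x" "col x \<noteq> col y" using Esym colE by blast+
    thus "(x,y) \<in> Or0 \<longleftrightarrow> (y,x) \<notin> Or0" unfolding mem using \<open>E x y\<close> by simp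
  qed
  moreover have "acyclic Or0" by (rule height_acyclic[where c=h, OF hc])
  ultimately have O0: "Or0 \<in> Acyc V E" unfolding Acyc_def mem_Collect_eq by (intro conjI)
  have lv: "h y = 0 \<or> h y = 0 + 1" for y unfolding h_def by simp
  have "(Or0, Or0\<inverse>) \<in> kappa_equiv V E" by (rule swap[where c=h and L=0, OF O0 hc lv])
  thus ?thesis using O0 by blast
qed

end


context sg begin

definition kc :: "('a \<times> 'a) set \<Rightarrow> ('a \<times> 'a) set set" where "kc Or = kappa_equiv V E `` {Or}"
definition dc :: "('a \<times> 'a) set \<Rightarrow> ('a \<times> 'a) set set" where "dc Or = kc Or \<union> kc (Or\<inverse>)"

lemma kc_mem: "P \<in> kc Or \<longleftrightarrow> (Or, P) \<in> kappa_equiv V E" unfolding kc_def by simp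

lemma kc_eq: "kc Or = kc P \<longleftrightarrow> (Or, P) \<in> kappa_equiv V E"
proof
  assume "kc Or = kc P"
  hence "P \<in> kc Or" using kc_mem kappa_refl by blast
  thus "(Or, P) \<in> kappa_equiv V E" using kc_mem by blast
next
  assume a: "(Or, P) \<in> kappa_equiv V E"
  show "kc Or = kc P"
  proof (rule set_eqI)
    fix Q show "Q \<in> kc Or \<longleftrightarrow> Q \<in> kc P"
      unfolding kc_mem using a kappa_sym[OF a] kappa_trans by blast
  qed
qed

lemma K_eq: "Acyc V E // kappa_equiv V E = kc ` Acyc V E"
  unfolding quotient_def kc_def by blast

lemma delta_class:
  assumes Oa: "Or \<in> Acyc V E"
  shows "delta_equiv V E `` {Or} = dc Or"
proof -
  let ?T = "click_step V E \<union> (click_step V E)\<inverse> \<union> rev_step V E \<union> (rev_step V E)\<inverse>"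
  have dT: "delta_equiv V E = ?T\<^sup>*" unfolding delta_equiv_def ..
  have ST: "S \<subseteq> ?T" unfolding S_def by blast
  have kd: "kappa_equiv V E \<subseteq> delta_equiv V E" unfolding kappa_S dT by (rule rtrancl_mono[OF ST])
  have rv: "(Or, Or\<inverse>) \<in> delta_equiv V E"
  proof -
    have "(Or, Or\<inverse>) \<in> rev_step V E" unfolding rev_step_def rev_orient_def using Oa by simp
    thus ?thesis unfolding dT by blast
  qed
  have sub1: "dc Or \<subseteq> delta_equiv V E `` {Or}"
  proof
    fix Q assume "Q \<in> dc Or"
    hence "(Or, Q) \<in> kappa_equiv V E \<or> (Or\<inverse>, Q) \<in> kappa_equiv V E" unfolding dc_def Un_iff kc_mem by blast
    thus "Q \<in> delta_equiv V E `` {Or}"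
    proof
      assume "(Or, Q) \<in> kappa_equiv V E" thus ?thesis using kd by blast
    next
      assume "(Or\<inverse>, Q) \<in> kappa_equiv V E"
      hence "(Or\<inverse>, Q) \<in> delta_equiv V E" using kd by blast
      hence "(Or, Q) \<in> delta_equiv V E" using rv unfolding dT by (meson rtrancl_trans)
      thus ?thesis by blast
    qed
  qed
  have "(Or, Q) \<in> ?T\<^sup>* \<Longrightarrow> Q \<in> dc Or" for Q
  proof (induction rule: rtrancl_induct)
    case base show ?case unfolding dc_def Un_iff kc_mem using kappa_refl by blast
  next
    case (step Q R)
    have IH: "(Or, Q) \<in> kappa_equiv V E \<or> (Or\<inverse>, Q) \<in> kappa_equiv V E"
      using step(3) unfolding dc_def Un_iff kc_mem by blast
    consider "(Q,R) \<in> S" | "(Q,R) \<in> rev_step V E" | "(R,Q) \<in> rev_step V E"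
      using step(2) unfolding S_def by blast
    hence "(Or, R) \<in> kappa_equiv V E \<or> (Or\<inverse>, R) \<in> kappa_equiv V E"
    proof cases
      case 1
      hence "(Q,R) \<in> kappa_equiv V E" unfolding kappa_S by blast
      thus ?thesis using IH kappa_trans by blast
    next
      case 2
      hence R: "R = Q\<inverse>" unfolding rev_step_def rev_orient_def by simp
      from IH show ?thesis
      proof
        assume "(Or, Q) \<in> kappa_equiv V E"
        from kappa_conv[OF this] show ?thesis using R by simp
      next
        assume "(Or\<inverse>, Q) \<in> kappa_equiv V E"
        from kappa_conv[OF this] show ?thesis using R by simp
      qed
    next
      case 3
      hence R: "Q = R\<inverse>" unfolding rev_step_def rev_orient_def by simp
      hence R': "R = Q\<inverse>" by simp
      from IH show ?thesis
      proof
        assume "(Or, Q) \<in> kappa_equiv V E"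
        from kappa_conv[OF this] show ?thesis using R' by simp
      next
        assume "(Or\<inverse>, Q) \<in> kappa_equiv V E"
        from kappa_conv[OF this] show ?thesis using R' by simp
      qed
    qed
    thus ?case unfolding dc_def Un_iff kc_mem by blast
  qed
  hence "delta_equiv V E `` {Or} \<subseteq> dc Or" unfolding dT by blast
  with sub1 show ?thesis by blast
qed

lemma D_eq: "Acyc V E // delta_equiv V E = dc ` Acyc V E"
proof -
  have "Acyc V E // delta_equiv V E = (\<lambda>Oa. delta_equiv V E `` {Oa}) ` Acyc V E"
    unfolding quotient_def by blast
  also have "\<dots> = dc ` Acyc V E" using delta_class by (intro image_cong) auto
  finally show ?thesis .
qed

lemma finite_Acyc: "finite (Acyc V E)"
proof -
  have "Acyc V E \<subseteq> Pow (V \<times> V)"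
  proof
    fix Or assume Oa: "Or \<in> Acyc V E"
    show "Or \<in> Pow (V \<times> V)" using Acyc_E[OF Oa] EV by auto
  qed
  moreover have "finite (Pow (V \<times> V))" using finV by simp
  ultimately show ?thesis by (rule finite_subset)
qed

lemma fixed_transfer: "(Or, P) \<in> kappa_equiv V E \<Longrightarrow> (Or, Or\<inverse>) \<in> kappa_equiv V E \<Longrightarrow> (P, P\<inverse>) \<in> kappa_equiv V E"
proof -
  assume a: "(Or, P) \<in> kappa_equiv V E" and f: "(Or, Or\<inverse>) \<in> kappa_equiv V E"
  have "(P, Or) \<in> kappa_equiv V E" by (rule kappa_sym[OF a])
  moreover have "(Or\<inverse>, P\<inverse>) \<in> kappa_equiv V E" by (rule kappa_conv[OF a])
  ultimately show ?thesis using f kappa_trans by blast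
qed

lemma dc_eq: "kc P = kc Or \<or> kc P = kc (Or\<inverse>) \<Longrightarrow> dc P = dc Or"
proof -
  assume "kc P = kc Or \<or> kc P = kc (Or\<inverse>)"
  thus ?thesis
  proof
    assume "kc P = kc Or"
    hence "(P, Or) \<in> kappa_equiv V E" using kc_eq by blast
    hence "(P\<inverse>, Or\<inverse>) \<in> kappa_equiv V E" by (rule kappa_conv)
    hence "kc (P\<inverse>) = kc (Or\<inverse>)" using kc_eq by blast
    thus ?thesis unfolding dc_def using \<open>kc P = kc Or\<close> by simp
  next
    assume "kc P = kc (Or\<inverse>)"
    hence "(P, Or\<inverse>) \<in> kappa_equiv V E" using kc_eq by blast
    hence "(P\<inverse>, Or) \<in> kappa_equiv V E" using kappa_conv by fastforce
    hence "kc (P\<inverse>) = kc Or" using kc_eq by blast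
    thus ?thesis unfolding dc_def using \<open>kc P = kc (Or\<inverse>)\<close> by auto
  qed
qed

definition fib :: "('a \<times> 'a) set set \<Rightarrow> ('a \<times> 'a) set set set" where
  "fib d = {C \<in> kc ` Acyc V E. C \<subseteq> d}"

lemma fib_eq:
  assumes Oa: "Or \<in> Acyc V E"
  shows "fib (dc Or) = {kc Or, kc (Or\<inverse>)}"
proof
  show "{kc Or, kc (Or\<inverse>)} \<subseteq> fib (dc Or)"
    unfolding fib_def dc_def using Oa conv_Acyc[OF Oa] by auto
next
  show "fib (dc Or) \<subseteq> {kc Or, kc (Or\<inverse>)}"
  proof
    fix C assume "C \<in> fib (dc Or)"
    then obtain P where P: "P \<in> Acyc V E" "C = kc P" "kc P \<subseteq> dc Or" unfolding fib_def by blast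
    have "P \<in> kc P" unfolding kc_mem by (rule kappa_refl)
    hence "P \<in> kc Or \<or> P \<in> kc (Or\<inverse>)" using P(3) unfolding dc_def by blast
    hence "kc Or = kc P \<or> kc (Or\<inverse>) = kc P" unfolding kc_mem kc_eq .
    thus "C \<in> {kc Or, kc (Or\<inverse>)}" using P(2) by auto
  qed
qed

lemma card_fib:
  assumes Oa: "Or \<in> Acyc V E"
  shows "card (fib (dc Or)) = (if (Or, Or\<inverse>) \<in> kappa_equiv V E then 1 else 2)"
  unfolding fib_eq[OF Oa] using kc_eq[of Or "Or\<inverse>"] by auto

lemma card_K_sum:
  "card (kc ` Acyc V E) = (\<Sum>d\<in>dc ` Acyc V E. card (fib d))"
proof -
  have fin: "finite (dc ` Acyc V E)" using finite_Acyc by simp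
  have fin2: "\<forall>d\<in>dc ` Acyc V E. finite (fib d)" unfolding fib_def using finite_Acyc by simp
  have disj: "\<forall>d1\<in>dc ` Acyc V E. \<forall>d2\<in>dc ` Acyc V E. d1 \<noteq> d2 \<longrightarrow> fib d1 \<inter> fib d2 = {}"
  proof (intro ballI impI)
    fix d1 d2 assume d1: "d1 \<in> dc ` Acyc V E" and d2: "d2 \<in> dc ` Acyc V E" and ne: "d1 \<noteq> d2"
    obtain O1 where O1: "O1 \<in> Acyc V E" "d1 = dc O1" using d1 by blast
    obtain O2 where O2: "O2 \<in> Acyc V E" "d2 = dc O2" using d2 by blast
    show "fib d1 \<inter> fib d2 = {}"
    proof (rule ccontr)
      assume "fib d1 \<inter> fib d2 \<noteq> {}"
      then obtain C where "C \<in> fib d1" "C \<in> fib d2" by blast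
      then obtain P where P: "P \<in> Acyc V E" "C = kc P" unfolding fib_def by blast
      have "C \<in> {kc O1, kc (O1\<inverse>)}" "C \<in> {kc O2, kc (O2\<inverse>)}"
        using \<open>C \<in> fib d1\<close> \<open>C \<in> fib d2\<close> fib_eq O1 O2 by auto
      hence "kc P = kc O1 \<or> kc P = kc (O1\<inverse>)" "kc P = kc O2 \<or> kc P = kc (O2\<inverse>)" using P(2) by auto
      hence "dc P = dc O1" "dc P = dc O2" using dc_eq by blast+
      thus False using ne O1(2) O2(2) by simp
    qed
  qed
  have "kc ` Acyc V E = \<Union> (fib ` (dc ` Acyc V E))"
  proof
    show "kc ` Acyc V E \<subseteq> \<Union> (fib ` (dc ` Acyc V E))"
    proof
      fix C assume "C \<in> kc ` Acyc V E"
      then obtain P where P: "P \<in> Acyc V E" "C = kc P" by blast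
      hence "C \<in> fib (dc P)" using fib_eq by auto
      thus "C \<in> \<Union> (fib ` (dc ` Acyc V E))" using P(1) by blast
    qed
  next
    show "\<Union> (fib ` (dc ` Acyc V E)) \<subseteq> kc ` Acyc V E" unfolding fib_def by blast
  qed
  hence "card (kc ` Acyc V E) = card (\<Union> (fib ` (dc ` Acyc V E)))" by simp
  also have "\<dots> = (\<Sum>d\<in>dc ` Acyc V E. card (fib d))" by (rule card_UN_disjoint[OF fin fin2 disj])
  finally show ?thesis .
qed

lemma main_nonbip:
  assumes "\<not> bipartite V E"
  shows "card (kc ` Acyc V E) = 2 * card (dc ` Acyc V E)"
proof -
  have h: "\<forall>d\<in>dc ` Acyc V E. card (fib d) = 2"
  proof
    fix d assume "d \<in> dc ` Acyc V E"
    then obtain Oa where Oa: "Oa \<in> Acyc V E" "d = dc Oa" by blast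
    have "(Oa, Oa\<inverse>) \<notin> kappa_equiv V E" using fixed_bipartite[OF Oa(1)] assms by blast
    thus "card (fib d) = 2" using card_fib[OF Oa(1)] Oa(2) by simp
  qed
  have "(\<Sum>d\<in>dc ` Acyc V E. card (fib d)) = (\<Sum>d\<in>dc ` Acyc V E. 2)" using h by (intro sum.cong) auto
  thus ?thesis using card_K_sum by simp
qed

lemma main_bip:
  assumes "bipartite V E" and conn: "connected_graph V E"
  shows "card (kc ` Acyc V E) + 1 = 2 * card (dc ` Acyc V E)"
proof -
  obtain O0 where O0: "O0 \<in> Acyc V E" "(O0, O0\<inverse>) \<in> kappa_equiv V E" using exists_fixed[OF assms(1)] by blast
  let ?D = "dc ` Acyc V E"
  have d0: "dc O0 \<in> ?D" using O0 by blast
  have fin: "finite ?D" using finite_Acyc by simp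
  have cf: "card (fib d) = (if d = dc O0 then 1 else 2)" if dD: "d \<in> ?D" for d
  proof -
    obtain Oa where Oa: "Oa \<in> Acyc V E" "d = dc Oa" using dD by blast
    show ?thesis
    proof (cases "(Oa, Oa\<inverse>) \<in> kappa_equiv V E")
      case True
      have "(Oa, O0) \<in> kappa_equiv V E" by (rule fixed_unique[OF conn Oa(1) True O0])
      hence "kc Oa = kc O0" using kc_eq by blast
      hence "dc Oa = dc O0" using dc_eq by blast
      thus ?thesis using card_fib[OF Oa(1)] True Oa(2) by simp
    next
      case False
      have "dc Oa \<noteq> dc O0"
      proof
        assume eq: "dc Oa = dc O0"
        have "O0 \<in> dc O0" unfolding dc_def Un_iff kc_mem using kappa_refl by blast
        hence "O0 \<in> dc Oa" using eq by simp
        hence "(Oa, O0) \<in> kappa_equiv V E \<or> (Oa\<inverse>, O0) \<in> kappa_equiv V E" unfolding dc_def Un_iff kc_mem .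
        thus False
        proof
          assume "(Oa, O0) \<in> kappa_equiv V E"
          hence "(O0, Oa) \<in> kappa_equiv V E" by (rule kappa_sym)
          from fixed_transfer[OF this O0(2)] False show False by blast
        next
          assume "(Oa\<inverse>, O0) \<in> kappa_equiv V E"
          hence "(O0, Oa\<inverse>) \<in> kappa_equiv V E" by (rule kappa_sym)
          from fixed_transfer[OF this O0(2)] have "(Oa\<inverse>, Oa) \<in> kappa_equiv V E" by simp
          hence "(Oa, Oa\<inverse>) \<in> kappa_equiv V E" by (rule kappa_sym)
          thus False using False by blast
        qed
      qed
      thus ?thesis using card_fib[OF Oa(1)] False Oa(2) by simp
    qed
  qed
  have "(\<Sum>d\<in>?D. card (fib d)) = (\<Sum>d\<in>?D. if d = dc O0 then 1 else 2)" using cf by (intro sum.cong) auto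
  also have "\<dots> = (if dc O0 = dc O0 then 1 else 2) + (\<Sum>d\<in>?D - {dc O0}. if d = dc O0 then 1 else 2)"
    by (rule sum.remove[OF fin d0])
  also have "(\<Sum>d\<in>?D - {dc O0}. if d = dc O0 then 1 else 2) = (\<Sum>d\<in>?D - {dc O0}. (2::nat))"
    by (rule sum.cong) auto
  finally have "card (kc ` Acyc V E) = 1 + 2 * (card ?D - 1)" using card_K_sum fin d0 by (simp add: card_Diff_singleton)
  moreover have "card ?D > 0" using fin d0 card_gt_0_iff by blast
  ultimately show ?thesis by simp
qed

end

theorem proposition3:
  fixes V :: "'a set" and E :: "'a \<Rightarrow> 'a \<Rightarrow> bool"
  assumes "simple_graph V E" and "connected_graph V E"
  shows "(\<not> bipartite V E \<longrightarrow> real (delta V E) = real (kappa V E) / 2)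
       \<and> (bipartite V E \<longrightarrow> real (delta V E) = (real (kappa V E) + 1) / 2)"
proof -
  interpret sg V E by (rule sg.intro[OF assms(1)])
  have k: "kappa V E = card (kc ` Acyc V E)" unfolding kappa_def K_eq ..
  have d: "delta V E = card (dc ` Acyc V E)" unfolding delta_def D_eq ..
  show ?thesis
  proof (intro conjI impI)
    assume "\<not> bipartite V E"
    from main_nonbip[OF this] show "real (delta V E) = real (kappa V E) / 2" unfolding k d by simp
  next
    assume "bipartite V E"
    from main_bip[OF this assms(2)] have "real (card (kc ` Acyc V E) + 1) = real (2 * card (dc ` Acyc V E))"
      by (rule arg_cong)
    hence "real (card (kc ` Acyc V E)) + 1 = 2 * real (card (dc ` Acyc V E))" by simp
    thus "real (delta V E) = (real (kappa V E) + 1) / 2" unfolding k d by simp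
  qed
qed



end
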